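(* Let $m,n,d,n_0$ be positive integers, $R>0$, $\mathbb{S}^d:=[-R,R]^d$, $x\in\mathbb{R}^{m\times n}$, and let $G:\mathbb{R}^d\to\mathbb{R}^{m\times n}$ be continuous. Assume there exists $z^*\in\mathbb{S}^d$ with $\|x-G(z^* )\|_0\le n_0$. For $\lambda>0$ consider $$(\mathrm{P}_\lambda):\quad \min_{z\in\mathbb{S}^d,\ M\in\mathbb{R}^{m\times n}} \|(\mathbf{1}-M)\odot x-(\mathbf{1}-M)\odot G(z)\|_2^2+\lambda\|M\|_1 ,$$ and let $\hat M(\lambda)$ be any optimal $M$-component of a solution of $(\mathrm{P}_\lambda)$. Let $\tilde n=\min_{z\in\mathbb{S}^d}\|x-G(z)\|_0$, $\tilde{\mathcal{Z}}=\{z\in\mathbb{S}^d:\|x-G(z)\|_0=\tilde n\}$, and $\tilde{\mathcal{M}}:=\{I_{x-G(\tilde z)}:\tilde z\in\tilde{\mathcal{Z}}\}$, so that $\tilde{\mathcal M}\subseteq\{M\in\{0,1\}^{m\times n}:\|M\|_0\le\tilde n\}$. Then $d_\infty(\hat M(\lambda),\tilde{\mathcal{M}})\downarrow 0$ as $\lambda\downarrow 0$. Moreover, there is a finite $\tilde\lambda>0$ such that for every $\lambda\le\tilde\lambda$ there exists $\tilde M\in\tilde{\mathcal{M}}$ with $\tilde M=I_{\hat M(\lambda)}$. If in addition $\tilde{\mathcal{Z}}=\{z^*\}$, then, with $M^*:=I_{x-G(z^* )}$, (i) $\hat M(\lambda)\to M^*$ as $\lambda\downarrow 0$, and (ii)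 $I_{\hat M(\lambda)}=M^*$ for every $\lambda\le\tilde\lambda$.
   Context: For a matrix $T$, $\|T\|_0$ is the number of nonzero entries, and $\|T\|_1,\|T\|_2,\|T\|_\infty$ are computed by treating $T$ as a vector. $I_T$ denotes the nonzero mask of $T$: $(I_T)_{ij}=0$ if $T_{ij}=0$ and $1$ otherwise. $\mathbf{1}$ is the all-ones $m\times n$ matrix and $\odot$ is the entrywise product. For a point $a$ and a set $B$, $d_\infty(a,B):=\inf_{b\in B}\|a-b\|_\infty$. *)

theory Defs
  imports "HOL-Analysis.Analysis"
begin

text \<open>m x n real matrices are rendered as real^'n^'m (entry (i,j) is T$i$j);
  points of R^d as real^'d.  The finite index types fix the dimensions.\<close>

definition mat_l0 :: "real^'n^'m \<Rightarrow> nat" where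
  "mat_l0 T = card {(i,j). T$i$j \<noteq> 0}"

definition mat_l1 :: "real^'n^'m \<Rightarrow> real" where
  "mat_l1 T = (\<Sum>i\<in>UNIV. \<Sum>j\<in>UNIV. \<bar>T$i$j\<bar>)"

definition mat_l2 :: "real^'n^'m \<Rightarrow> real" where
  "mat_l2 T = sqrt (\<Sum>i\<in>UNIV. \<Sum>j\<in>UNIV. (T$i$j)^2)"

definition mat_linf :: "real^'n^'m \<Rightarrow> real" where
  "mat_linf T = Max ((\<lambda>(i,j). \<bar>T$i$j\<bar>) ` UNIV)"

definition nzmask :: "real^'n^'m \<Rightarrow> real^'n^'m" where
  "nzmask T = (\<chi> i j. if T$i$j = 0 then 0 else 1)"

definition ones_mat :: "real^'n^'m" where
  "ones_mat = (\<chi> i j. 1)"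

definition hadamard :: "real^'n^'m \<Rightarrow> real^'n^'m \<Rightarrow> real^'n^'m" where
  "hadamard A B = (\<chi> i j. A$i$j * B$i$j)"

definition d_inf :: "real^'n^'m \<Rightarrow> (real^'n^'m) set \<Rightarrow> real" where
  "d_inf a B = Inf ((\<lambda>b. mat_linf (a - b)) ` B)"

definition box_set :: "real \<Rightarrow> (real^'d) set" where
  "box_set R = {z. \<forall>k. \<bar>z$k\<bar> \<le> R}"

definition obj :: "(real^'d \<Rightarrow> real^'n^'m) \<Rightarrow> real^'n^'m \<Rightarrow> real \<Rightarrow> real^'d \<Rightarrow> real^'n^'m \<Rightarrow> real" where
  "obj G x lam z M =
     (mat_l2 (hadamard (ones_mat - M) x - hadamard (ones_mat - M) (G z)))^2 + lam * mat_l1 M"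

definition is_solution :: "real \<Rightarrow> (real^'d \<Rightarrow> real^'n^'m) \<Rightarrow> real^'n^'m \<Rightarrow> real \<Rightarrow> real^'d \<Rightarrow> real^'n^'m \<Rightarrow> bool" where
  "is_solution R G x lam z M \<longleftrightarrow> z \<in> box_set R \<and>
     (\<forall>z'\<in>box_set R. \<forall>M'. obj G x lam z M \<le> obj G x lam z' M')"

definition opt_M :: "real \<Rightarrow> (real^'d \<Rightarrow> real^'n^'m) \<Rightarrow> real^'n^'m \<Rightarrow> real \<Rightarrow> real^'n^'m \<Rightarrow> bool" where
  "opt_M R G x lam M \<longleftrightarrow> (\<exists>z. is_solution R G x lam z M)"

definition n_tilde :: "real \<Rightarrow> (real^'d \<Rightarrow> real^'n^'m) \<Rightarrow> real^'n^'m \<Rightarrow> nat" where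
  "n_tilde R G x = Min ((\<lambda>z. mat_l0 (x - G z)) ` box_set R)"

definition Z_tilde :: "real \<Rightarrow> (real^'d \<Rightarrow> real^'n^'m) \<Rightarrow> real^'n^'m \<Rightarrow> (real^'d) set" where
  "Z_tilde R G x = {z \<in> box_set R. mat_l0 (x - G z) = n_tilde R G x}"

definition M_tilde :: "real \<Rightarrow> (real^'d \<Rightarrow> real^'n^'m) \<Rightarrow> real^'n^'m \<Rightarrow> (real^'n^'m) set" where
  "M_tilde R G x = (\<lambda>z. nzmask (x - G z)) ` Z_tilde R G x"

end

theory Submission
  imports Defs
begin

definition ent :: "real^'n^'m \<Rightarrow> ('m \<times> 'n) \<Rightarrow> real" where
  "ent A p = A $ fst p $ snd p"

definition supp :: "real^'n^'m \<Rightarrow> ('m \<times> 'n) set" where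
  "supp A = {p. ent A p \<noteq> 0}"

lemma mat_l0_supp: "mat_l0 A = card (supp A)"
  unfolding mat_l0_def supp_def ent_def
  by (rule arg_cong[where f=card]) auto

lemma nzmask_eq_iff: "nzmask A = nzmask B \<longleftrightarrow> supp A = supp B"
proof
  assume eq: "nzmask A = nzmask B"
  have "(A$i$j = 0) = (B$i$j = 0)" for i j
  proof -
    have "nzmask A $ i $ j = nzmask B $ i $ j" using eq by simp
    then have "(if A$i$j = 0 then 0 else 1::real) = (if B$i$j = 0 then 0 else 1)"
      unfolding nzmask_def by simp
    then show ?thesis by (cases "A$i$j = 0"; cases "B$i$j = 0") auto
  qed
  then show "supp A = supp B" unfolding supp_def ent_def by simp
next
  assume eq: "supp A = supp B"
  have "(A$i$j = 0) = (B$i$j = 0)" for i j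
  proof -
    have "((i,j) \<in> supp A) = ((i,j) \<in> supp B)" using eq by simp
    then show ?thesis unfolding supp_def ent_def by simp
  qed
  then show "nzmask A = nzmask B" unfolding nzmask_def by simp
qed

lemma cont_ent:
  assumes "continuous_on UNIV G"
  shows "continuous_on S (\<lambda>z. ent (x - G z) p)"
proof -
  have "continuous_on UNIV (\<lambda>z. x - G z)" using continuous_on_diff[OF continuous_on_const assms] .
  then have "continuous_on UNIV (\<lambda>z. (x - G z) $ fst p $ snd p)"
    by (intro continuous_on_component)
  then show ?thesis unfolding ent_def using continuous_on_subset by blast
qed

lemma compact_box: "compact (box_set R :: (real^'d) set)"
proof -
  have "box_set R = cbox (\<chi> k. -R) (\<chi> k. R :: real^'d)"
    unfolding box_set_def mem_box_cart set_eq_iff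
    apply (auto simp: abs_le_iff) apply (metis minus_le_iff) apply (metis minus_le_iff) done
  then show ?thesis by simp
qed

lemma sum_UNIV_pairs: "(\<Sum>i\<in>UNIV. \<Sum>j\<in>UNIV. f i j) = (\<Sum>p\<in>UNIV. f (fst p) (snd p))"
  by (simp add: sum.cartesian_product UNIV_Times_UNIV[symmetric] case_prod_beta del: UNIV_Times_UNIV)

definition gfun :: "real \<Rightarrow> real \<Rightarrow> real \<Rightarrow> real" where
  "gfun lam a t = (1 - t)^2 * a + lam * \<bar>t\<bar>"

lemma obj_sum: "obj G x lam z M = (\<Sum>p\<in>UNIV. gfun lam ((ent (x - G z) p)^2) (ent M p))"
proof -
  have "(mat_l2 (hadamard (ones_mat - M) x - hadamard (ones_mat - M) (G z)))^2
     = (\<Sum>p\<in>UNIV. (1 - ent M p)^2 * (ent (x - G z) p)^2)"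
    unfolding mat_l2_def
    by (subst real_sqrt_pow2) (auto intro!: sum_nonneg simp: sum_UNIV_pairs hadamard_def ones_mat_def ent_def
         power_mult_distrib right_diff_distrib[symmetric])
  moreover have "mat_l1 M = (\<Sum>p\<in>UNIV. \<bar>ent M p\<bar>)"
    unfolding mat_l1_def by (simp add: sum_UNIV_pairs ent_def)
  ultimately show ?thesis unfolding obj_def gfun_def
    by (simp add: sum.distrib sum_distrib_left algebra_simps)
qed

lemma entry_big:
  assumes "lam > 0" "a > lam/2" "\<forall>t. gfun lam a m \<le> gfun lam a t"
  shows "m = 1 - lam/(2*a)"
proof -
  define t0 where "t0 = 1 - lam/(2*a)"
  have a0: "a > 0" using assms by simp
  have t0p: "t0 > 0" unfolding t0_def using assms a0 by (simp add: field_simps)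
  have key: "gfun lam a t - gfun lam a t0 = a * (t - t0)^2" if "t \<ge> 0" for t
    using that t0p a0 unfolding gfun_def t0_def by (simp add: field_simps power2_eq_square)
  have le: "gfun lam a m \<le> gfun lam a t0" using assms by simp
  show ?thesis
  proof (cases "m \<ge> 0")
    case True
    then have "a * (m - t0)^2 \<le> 0" using key[OF True] le by simp
    then have "(m - t0)^2 = 0" using a0
      by (metis mult_le_0_iff not_less order_antisym zero_le_power2)
    then show ?thesis unfolding t0_def by simp
  next
    case False
    have "gfun lam a m > a" unfolding gfun_def using False a0 assms(1)
    proof -
      have "(1 - m)^2 > 1" using False by (simp add: power2_eq_square) (smt (verit) mult_less_cancel_right2 zero_less_mult_iff)
      then have "(1-m)^2 * a > a" using a0 by simp
      moreover have "lam * \<bar>m\<bar> \<ge> 0" using assms(1) by simp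
      ultimately show "(1 - m)^2 * a + lam * \<bar>m\<bar> > a" by linarith
    qed
    moreover have "gfun lam a t0 \<le> gfun lam a 0" using key[of 0] a0 by (smt (verit) mult_nonneg_nonneg zero_le_power2)
    moreover have "gfun lam a 0 = a" unfolding gfun_def by simp
    ultimately show ?thesis using le by linarith
  qed
qed

lemma entry_small:
  assumes "lam > 0" "a \<ge> 0" "a \<le> lam/2" "\<forall>t. gfun lam a m \<le> gfun lam a t"
  shows "m = 0"
proof (rule ccontr)
  assume m0: "m \<noteq> 0"
  have le: "gfun lam a m \<le> a" using assms(4)[rule_format, of 0] unfolding gfun_def by simp
  have "gfun lam a m > a"
  proof (cases "m > 0")
    case True
    have "(1 - m)^2 * a = a - 2*a*m + a*m^2" by (simp add: power2_eq_square algebra_simps)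
    moreover have "lam * \<bar>m\<bar> = lam * m" using True by simp
    moreover have "2*a*m \<le> lam * m" using True assms by (simp add: mult_right_mono)
    moreover have "a*m^2 + (lam*m - 2*a*m) > 0"
    proof (cases "a = 0")
      case True then show ?thesis using \<open>m>0\<close> assms(1) by simp
    next
      case False then have "a*m^2 > 0" using assms(2) m0 by simp
      then show ?thesis using \<open>2*a*m \<le> lam * m\<close> by linarith
    qed
    ultimately show ?thesis unfolding gfun_def by linarith
  next
    case False
    then have mn: "m < 0" using m0 by simp
    have "(1 - m)^2 \<ge> 1" using mn by (simp add: power2_eq_square) (smt (verit) mult_le_cancel_right1)
    then have "(1-m)^2 * a \<ge> a" using assms(2) by (simp add: mult_le_cancel_right1)
    moreover have "lam * \<bar>m\<bar> > 0" using assms(1) mn by (simp add: mult_pos_neg)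
    ultimately show ?thesis unfolding gfun_def by linarith
  qed
  then show False using le by simp
qed

lemma sum_split_at: "(\<Sum>q\<in>UNIV. f q) = f p + (\<Sum>q\<in>UNIV-{p}. f (q::'a::finite))"
  by (simp add: sum.remove)

lemma solution_entry:
  assumes "is_solution R G x lam z M"
  shows "gfun lam ((ent (x - G z) p)^2) (ent M p) \<le> gfun lam ((ent (x - G z) p)^2) t"
proof -
  define M' where "M' = (\<chi> i j. if (i,j) = p then t else M$i$j)"
  have e1: "ent M' p = t" unfolding M'_def ent_def by simp
  have e2: "ent M' q = ent M q" if "q \<noteq> p" for q
    using that unfolding M'_def ent_def by (cases q) auto
  have "obj G x lam z M \<le> obj G x lam z M'" using assms unfolding is_solution_def by blast
  then have "(\<Sum>q\<in>UNIV. gfun lam ((ent (x - G z) q)^2) (ent M q))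
     \<le> (\<Sum>q\<in>UNIV. gfun lam ((ent (x - G z) q)^2) (ent M' q))" by (simp add: obj_sum)
  moreover have "(\<Sum>q\<in>UNIV-{p}. gfun lam ((ent (x - G z) q)^2) (ent M' q))
     = (\<Sum>q\<in>UNIV-{p}. gfun lam ((ent (x - G z) q)^2) (ent M q))"
    by (rule sum.cong) (auto simp: e2)
  ultimately show ?thesis by (simp add: sum_split_at[of _ p] e1)
qed

definition fval :: "real \<Rightarrow> real \<Rightarrow> real" where
  "fval lam a = (if a > lam/2 then lam - lam^2/(4*a) else a)"

lemma solution_entry_facts:
  fixes p :: "'m::finite \<times> 'n::finite" and G :: "real^'d \<Rightarrow> real^'n^'m"
  assumes "is_solution R G x lam z M" "lam > 0"
  defines "a \<equiv> (ent (x - G z) p)^2"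
  shows "gfun lam a (ent M p) = fval lam a"
    and "ent M p \<noteq> 0 \<longleftrightarrow> a > lam/2"
    and "a > lam/2 \<Longrightarrow> ent M p = 1 - lam/(2*a)"
proof -
  have opt: "\<forall>t. gfun lam a (ent M p) \<le> gfun lam a t"
    using solution_entry[OF assms(1)] unfolding a_def by blast
  have a0: "a \<ge> 0" unfolding a_def by simp
  show "a > lam/2 \<Longrightarrow> ent M p = 1 - lam/(2*a)" using entry_big[OF assms(2) _ opt] by blast
  show "gfun lam a (ent M p) = fval lam a"
  proof (cases "a > lam/2")
    case True
    then have a0: "a > 0" using assms(2) by simp
    have e: "ent M p = 1 - lam/(2*a)" using entry_big[OF assms(2) True opt] .
    have "1 - lam/(2*a) \<ge> 0" using True a0 by (simp add: field_simps)
    then have "gfun lam a (1 - lam/(2*a)) = (lam/(2*a))^2 * a + lam * (1 - lam/(2*a))"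
      unfolding gfun_def by simp
    also have "\<dots> = fval lam a" unfolding fval_def using True a0
      by (simp add: field_simps power2_eq_square)
    finally show ?thesis using e by simp
  next
    case False
    then show ?thesis using entry_small[OF assms(2) a0 _ opt] unfolding gfun_def fval_def by simp
  qed
  show "ent M p \<noteq> 0 \<longleftrightarrow> a > lam/2"
  proof (cases "a > lam/2")
    case True
    then have "lam/(2*a) < 1" using assms(2) by (simp add: field_simps)
    then show ?thesis using True entry_big[OF assms(2) True opt] by simp
  next
    case False
    then show ?thesis using entry_small[OF assms(2) a0 _ opt] by simp
  qed
qed

lemma solution_obj:
  assumes "is_solution R G x lam z M" "lam > 0"
  shows "obj G x lam z M = (\<Sum>p\<in>UNIV. fval lam ((ent (x - G z) p)^2))"
  unfolding obj_sum using solution_entry_facts(1)[OF assms] by simp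

lemma fval_ge: "lam > 0 \<Longrightarrow> a \<ge> 0 \<Longrightarrow> fval lam a \<ge> 0"
  unfolding fval_def by (auto simp: field_simps power2_eq_square)

lemma fval_ge_half: "lam > 0 \<Longrightarrow> a > lam/2 \<Longrightarrow> fval lam a \<ge> lam/2"
  unfolding fval_def by (auto simp: field_simps power2_eq_square)

lemma fval_ge_c: "lam > 0 \<Longrightarrow> c > 0 \<Longrightarrow> a \<ge> c^2 \<Longrightarrow> c^2 > lam/2 \<Longrightarrow> fval lam a \<ge> lam - lam^2/(4*c^2)"
proof -
  assume h: "lam > 0" "c > 0" "a \<ge> c^2" "c^2 > lam/2"
  then have "a > lam/2" by simp
  moreover have "lam^2/(4*a) \<le> lam^2/(4*c^2)" using h
    by (intro divide_left_mono) (auto simp: )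
  ultimately show ?thesis unfolding fval_def by simp
qed

lemma box_finite_img:
  fixes G :: "real^'d \<Rightarrow> real^'n::finite^'m::finite"
  shows "finite ((\<lambda>z. mat_l0 (x - G z)) ` (box_set R :: (real^'d) set))"
proof -
  have "(\<lambda>z. mat_l0 (x - G z)) ` (box_set R :: (real^'d) set) \<subseteq> {..card (UNIV :: ('m\<times>'n) set)}"
  proof -
    have "card (supp A) \<le> card (UNIV :: ('m\<times>'n) set)" for A :: "real^'n^'m"
      by (rule card_mono) auto
    then show ?thesis by (auto simp: mat_l0_supp simp del: UNIV_Times_UNIV)
  qed
  then show ?thesis using finite_subset by blast
qed

lemma n_tilde_le:
  fixes G :: "real^'d \<Rightarrow> real^'n::finite^'m::finite"
  shows "z \<in> box_set R \<Longrightarrow> n_tilde R G x \<le> mat_l0 (x - G z)"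
  unfolding n_tilde_def using box_finite_img by (intro Min_le) auto

lemma Z_tilde_ne:
  fixes G :: "real^'d \<Rightarrow> real^'n::finite^'m::finite"
  shows "R \<ge> 0 \<Longrightarrow> \<exists>z. z \<in> Z_tilde R G x"
proof -
  assume "R \<ge> 0"
  then have "(0::real^'d) \<in> box_set R" unfolding box_set_def by simp
  then have "n_tilde R G x \<in> (\<lambda>z. mat_l0 (x - G z)) ` (box_set R :: (real^'d) set)"
    unfolding n_tilde_def using box_finite_img by (intro Min_in) auto
  then show ?thesis unfolding Z_tilde_def by auto
qed

lemma obj_mask: "obj G x lam z (nzmask (x - G z)) = lam * mat_l0 (x - G z)"
proof -
  have "gfun lam ((ent (x - G z) p)^2) (ent (nzmask (x - G z)) p) = (if p \<in> supp (x - G z) then lam else 0)" for p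
    unfolding gfun_def supp_def by (auto simp: ent_def nzmask_def)
  then show ?thesis unfolding obj_sum mat_l0_supp by (simp add: sum.If_cases)
qed

lemma unif_pos_single:
  fixes q :: "'a::metric_space \<Rightarrow> real"
  assumes "compact K" "continuous_on K q" "\<forall>z\<in>K. q z > 0"
  shows "\<exists>e>0. \<forall>z\<in>K. e \<le> q z"
proof (cases "K = {}")
  case True then show ?thesis by (intro exI[of _ 1]) auto
next
  case False
  then obtain z0 where "z0 \<in> K" "\<forall>y\<in>K. q z0 \<le> q y"
    using continuous_attains_inf[OF assms(1) False assms(2)] by blast
  then show ?thesis using assms(3) by (intro exI[of _ "q z0"]) auto
qed

lemma unif_pos:
  fixes q :: "'t \<Rightarrow> 'a::metric_space \<Rightarrow> real"
  assumes "finite F" "\<forall>T\<in>F. compact (K T) \<and> continuous_on (K T) (q T) \<and> (\<forall>z\<in>K T. q T z > 0)"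
  shows "\<exists>e>0. \<forall>T\<in>F. \<forall>z\<in>K T. e \<le> q T z"
  using assms
proof (induction F rule: finite_induct)
  case empty then show ?case by (intro exI[of _ 1]) auto
next
  case (insert T F)
  then obtain e1 where e1: "e1 > 0" "\<forall>T\<in>F. \<forall>z\<in>K T. e1 \<le> q T z" by auto
  obtain e2 where e2: "e2 > 0" "\<forall>z\<in>K T. e2 \<le> q T z"
    using unif_pos_single[of "K T" "q T"] insert.prems by auto
  have "\<forall>T'\<in>insert T F. \<forall>z\<in>K T'. min e1 e2 \<le> q T' z"
  proof (intro ballI)
    fix T' z assume "T' \<in> insert T F" "z \<in> K T'"
    then show "min e1 e2 \<le> q T' z" using e1 e2
      by (metis insert_iff min.coboundedI1 min.coboundedI2)
  qed
  then show ?case using e1 e2 by (intro exI[of _ "min e1 e2"]) auto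
qed

lemma mat_linf_le: "(\<forall>p. \<bar>ent A p\<bar> \<le> b) \<Longrightarrow> mat_linf A \<le> b"
  unfolding mat_linf_def ent_def by (auto simp: case_prod_beta)

lemma mat_linf_ge:
  fixes A :: "real^'n::finite^'m::finite"
  shows "mat_linf A \<ge> 0"
proof -
  define i :: 'm where "i = undefined"
  define j :: 'n where "j = undefined"
  have "\<bar>A$i$j\<bar> \<le> mat_linf A" unfolding mat_linf_def
    by (rule Max_ge) (auto intro!: image_eqI[of _ _ "(i,j)"])
  then show ?thesis by linarith
qed

lemma d_inf_bounds:
  assumes "Mt \<in> B"
  shows "0 \<le> d_inf M B" "d_inf M B \<le> mat_linf (M - Mt)"
proof -
  show "0 \<le> d_inf M B" unfolding d_inf_def using assms
    by (intro cInf_greatest) (auto simp: mat_linf_ge)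
  show "d_inf M B \<le> mat_linf (M - Mt)" unfolding d_inf_def using assms
    by (intro cInf_lower) (auto simp: bdd_below_def intro!: exI[of _ 0] mat_linf_ge)
qed

lemma ent_nzmask: "ent (nzmask M) p = (if ent M p = 0 then 0 else 1)"
  unfolding ent_def nzmask_def by simp

lemma ent_diff: "ent (A - B) p = ent A p - ent B p"
  unfolding ent_def by simp

lemma ar1:
  fixes lam c :: real
  assumes "lam > 0" "c > 0" "real N * lam < c^2"
    and "real N * (lam - lam^2/(4*c^2)) + lam/2 \<le> lam * real N"
  shows False
proof -
  have "lam/2 \<le> real N * lam^2/(4*c^2)" using assms(4) by (simp add: algebra_simps)
  then have "lam/2 * (4*c^2) \<le> real N * lam^2" using assms(2) by (simp add: field_simps)
  then have "lam * (2*c^2) \<le> lam * (real N * lam)" by (simp add: power2_eq_square algebra_simps)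
  then have "2*c^2 \<le> real N * lam" using assms(1) by simp
  then show False using assms(3) assms(2) by (smt (verit) zero_less_power)
qed

lemma ar2:
  fixes lam c e :: real
  assumes "lam > 0" "c > 0" "e > 0" "lam \<le> 1" "lam \<le> c^2*e/(real N+1)"
    and "e \<le> real N * lam^2/(4*c^2)"
  shows False
proof -
  have l2: "lam^2 \<le> lam" unfolding power2_eq_square
    using assms(1,4) by (intro mult_left_le_one_le) auto
  have q: "real N/(real N+1) \<le> 1" by simp
  have ce: "c^2*e > 0" using assms(2,3) by simp
  have "real N * lam^2 \<le> real N * lam" using l2 by (intro mult_left_mono) auto
  also have "\<dots> \<le> real N * (c^2*e/(real N+1))" using assms(5) by (intro mult_left_mono) auto
  also have "\<dots> = (real N/(real N+1)) * (c^2*e)" by simp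
  also have "\<dots> \<le> c^2 * e" using q ce by (intro mult_left_le_one_le) auto
  finally have A: "real N * lam^2 \<le> c^2 * e" .
  have "4*c^2 > 0" using assms(2) by simp
  then have B: "e * (4*c^2) \<le> real N * lam^2" using assms(6) by (simp add: pos_le_divide_eq)
  have "e * (4*c^2) = 4 * (c^2*e)" by simp
  then show False using A B ce by linarith
qed

theorem theorem2:
  fixes R :: real and n0 :: nat
    and x :: "real^'n^'m" and G :: "real^'d \<Rightarrow> real^'n^'m"
    and zstar :: "real^'d"
    and Mhat :: "real \<Rightarrow> real^'n^'m"
  assumes "n0 > 0" and "R > 0"
    and "continuous_on UNIV G"
    and "zstar \<in> box_set R" and "mat_l0 (x - G zstar) \<le> n0"
    and "\<forall>lam>0. opt_M R G x lam (Mhat lam)"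
  shows "((\<lambda>lam. d_inf (Mhat lam) (M_tilde R G x)) \<longlongrightarrow> 0) (at_right 0) \<and>
    (\<exists>lt>0.
       (\<forall>lam M. 0 < lam \<and> lam \<le> lt \<and> opt_M R G x lam M \<longrightarrow>
          (\<exists>Mt\<in>M_tilde R G x. Mt = nzmask M)) \<and>
       (Z_tilde R G x = {zstar} \<longrightarrow>
          (Mhat \<longlongrightarrow> nzmask (x - G zstar)) (at_right 0) \<and>
          (\<forall>lam M. 0 < lam \<and> lam \<le> lt \<and> opt_M R G x lam M \<longrightarrow>
             nzmask M = nzmask (x - G zstar))))"
proof -
  note cG = assms(3)
  define N where "N = n_tilde R G x"
  define a where "a = (\<lambda>z p. (ent (x - G z) p)^2)"
  define CU where "CU = card (UNIV :: ('m\<times>'n) set)"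
  have CU0: "CU > 0" unfolding CU_def by simp
  have suppU: "card (supp A) \<le> CU" for A :: "real^'n^'m"
    unfolding CU_def by (rule card_mono) auto
  have R0: "R \<ge> 0" using assms(2) by simp
  obtain zt where zt: "zt \<in> Z_tilde R G x" using Z_tilde_ne[OF R0] by blast
  then have ztb: "zt \<in> box_set R" and ztN: "mat_l0 (x - G zt) = N"
    unfolding Z_tilde_def N_def by auto
  have N_le: "N \<le> card (supp (x - G z))" if "z \<in> box_set R" for z
    using n_tilde_le[OF that] unfolding N_def mat_l0_supp .
  have a_nn: "a z p \<ge> 0" for z :: "real^'d" and p unfolding a_def by simp
  have a_cont: "continuous_on S (\<lambda>z. \<Sum>p\<in>-T. a z p)" for S :: "(real^'d) set" and T
    unfolding a_def by (intro continuous_on_sum continuous_on_power cont_ent[OF cG])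
  have fin_sets: "finite (A :: ('m\<times>'n) set set)" for A
    by (rule finite_subset[of _ UNIV]) auto
  have sum_zero: "supp (x - G z) \<subseteq> T" if "\<not> (\<Sum>p\<in>-T. a z p) > 0" for z T
  proof -
    have "(\<Sum>p\<in>-T. a z p) = 0" using that a_nn by (meson not_less order_antisym sum_nonneg)
    then have "\<forall>p\<in>-T. a z p = 0" using a_nn by (simp add: sum_nonneg_eq_0_iff)
    then show ?thesis unfolding supp_def a_def by auto
  qed
  have "\<exists>e>0. \<forall>T\<in>{T. card T < N}. \<forall>z\<in>box_set R. e \<le> (\<Sum>p\<in>-T. a z p)"
  proof (rule unif_pos)
    show "finite {T::('m\<times>'n) set. card T < N}" by (rule fin_sets)
    show "\<forall>T\<in>{T. card T < N}. compact (box_set R) \<and> continuous_on (box_set R) (\<lambda>z. \<Sum>p\<in>-T. a z p)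
        \<and> (\<forall>z\<in>box_set R. 0 < (\<Sum>p\<in>-T. a z p))"
    proof (intro ballI conjI compact_box a_cont)
      fix T :: "('m\<times>'n) set" and z :: "real^'d" assume T: "T \<in> {T. card T < N}" and z: "z \<in> box_set R"
      show "0 < (\<Sum>p\<in>-T. a z p)"
      proof (rule ccontr)
        assume "\<not> 0 < (\<Sum>p\<in>-T. a z p)"
        then have "supp (x - G z) \<subseteq> T" by (rule sum_zero)
        then have "card (supp (x - G z)) \<le> card T" by (intro card_mono) auto
        then show False using T N_le[OF z] by simp
      qed
    qed
  qed
  then obtain e1 where e1: "e1 > 0" "\<forall>T. card T < N \<longrightarrow> (\<forall>z\<in>box_set R. e1 \<le> (\<Sum>p\<in>-T. a z p))"
    by auto
  define c where "c = sqrt (e1 / CU)"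
  have c0: "c > 0" unfolding c_def using e1 CU0 by simp
  have c2: "c^2 = e1 / CU" unfolding c_def using e1 CU0 by simp
  have cB: "N \<le> card {p. c \<le> \<bar>ent (x - G z) p\<bar>}" if z: "z \<in> box_set R" for z
  proof (rule ccontr)
    define B where "B = {p. c \<le> \<bar>ent (x - G z) p\<bar>}"
    assume "\<not> N \<le> card {p. c \<le> \<bar>ent (x - G z) p\<bar>}"
    then have BN: "card B < N" unfolding B_def by simp
    have "e1 \<le> (\<Sum>p\<in>-B. a z p)" using e1(2) BN z by blast
    moreover have "-B \<noteq> {}"
    proof
      assume "-B = {}"
      then have "B = UNIV" by auto
      then show False using BN N_le[OF z] suppU[of "x - G z"] unfolding CU_def by simp
    qed
    then have "(\<Sum>p\<in>-B. a z p) < (\<Sum>p\<in>-B. c^2)"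
    proof (intro sum_strict_mono)
      fix p assume "p \<in> -B"
      then have "\<bar>ent (x - G z) p\<bar> < c" unfolding B_def by auto
      then have "\<bar>ent (x - G z) p\<bar>^2 < c^2" by (intro power_strict_mono) auto
      then show "a z p < c^2" unfolding a_def by simp
    qed auto
    moreover have "(\<Sum>p\<in>-B. c^2) \<le> e1"
    proof -
      have "card (-B) \<le> CU" unfolding CU_def by (rule card_mono) auto
      then have "real (card (-B)) * c^2 \<le> real CU * c^2" by (intro mult_right_mono) auto
      also have "\<dots> = e1" using c2 CU0 by simp
      finally show ?thesis by simp
    qed
    ultimately show False by simp
  qed
  define Good where "Good T \<longleftrightarrow> (\<exists>z\<in>Z_tilde R G x. supp (x - G z) = T)" for T
  define K where "K T = box_set R \<inter> (\<Inter>p\<in>T. {z. c \<le> \<bar>ent (x - G z) p\<bar>})" for T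
  have "\<exists>e>0. \<forall>T\<in>{T. card T = N \<and> \<not> Good T}. \<forall>z\<in>K T. e \<le> (\<Sum>p\<in>-T. a z p)"
  proof (rule unif_pos)
    show "finite {T::('m\<times>'n) set. card T = N \<and> \<not> Good T}" by (rule fin_sets)
    show "\<forall>T\<in>{T. card T = N \<and> \<not> Good T}. compact (K T) \<and> continuous_on (K T) (\<lambda>z. \<Sum>p\<in>-T. a z p)
        \<and> (\<forall>z\<in>K T. 0 < (\<Sum>p\<in>-T. a z p))"
    proof (intro ballI conjI a_cont)
      fix T assume T: "T \<in> {T. card T = N \<and> \<not> Good T}"
      have "closed {z. c \<le> \<bar>ent (x - G z) p\<bar>}" for p
        by (intro closed_Collect_le continuous_on_const continuous_on_rabs cont_ent[OF cG])
      then show "compact (K T)" unfolding K_def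
        by (intro compact_Int_closed compact_box closed_INT) auto
      fix z assume z: "z \<in> K T"
      show "0 < (\<Sum>p\<in>-T. a z p)"
      proof (rule ccontr)
        assume "\<not> 0 < (\<Sum>p\<in>-T. a z p)"
        then have s1: "supp (x - G z) \<subseteq> T" by (rule sum_zero)
        have "T \<subseteq> supp (x - G z)" using z c0 unfolding K_def supp_def by force
        then have "supp (x - G z) = T" using s1 by auto
        moreover have "z \<in> box_set R" using z unfolding K_def by auto
        ultimately have "z \<in> Z_tilde R G x" using T unfolding Z_tilde_def N_def mat_l0_supp by auto
        then show False using T \<open>supp (x - G z) = T\<close> unfolding Good_def by auto
      qed
    qed
  qed
  then obtain e2 where e2: "e2 > 0"
    "\<forall>T. card T = N \<and> \<not> Good T \<longrightarrow> (\<forall>z\<in>K T. e2 \<le> (\<Sum>p\<in>-T. a z p))"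
    by auto
  define lt where "lt = min 1 (min (c^2/(real N+1)) (c^2 * e2/(real N+1)))"
  have lt0: "lt > 0" unfolding lt_def using c0 e2 by simp
  have key: "Good (supp M) \<and> (\<forall>p. \<bar>ent M p - ent (nzmask M) p\<bar> \<le> lam/(2*c^2))"
    if lam: "0 < lam" "lam \<le> lt" and sol: "is_solution R G x lam z M" for lam z M
  proof -
    have zb: "z \<in> box_set R" using sol unfolding is_solution_def by auto
    define S where "S = supp M"
    have S_eq: "p \<in> S \<longleftrightarrow> a z p > lam/2" for p
      using solution_entry_facts(2)[OF sol lam(1)] unfolding S_def supp_def a_def by auto
    define B where "B = {p. c \<le> \<bar>ent (x - G z) p\<bar>}"
    have BN: "N \<le> card B" unfolding B_def using cB[OF zb] .
    have lamc: "lam \<le> c^2/(real N+1)" using lam unfolding lt_def by simp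
    have "c^2/(real N+1) \<le> c^2" using c0 by (simp add: field_simps)
    then have c2l: "c^2 > lam/2" using lamc lam by linarith
    have NL: "real N * lam < c^2"
    proof -
      have "real N * lam \<le> real N * (c^2/(real N+1))" using lamc by (intro mult_left_mono) auto
      also have "\<dots> < c^2" using c0 by (simp add: field_simps)
      finally show ?thesis .
    qed
    have aB: "a z p \<ge> c^2" if "p \<in> B" for p
    proof -
      have "c^2 \<le> \<bar>ent (x - G z) p\<bar>^2" using that c0 unfolding B_def by (intro power_mono) auto
      then show ?thesis unfolding a_def by simp
    qed
    have BS: "B \<subseteq> S" using aB c2l S_eq by force
    obtain B' where B': "B' \<subseteq> B" "card B' = N" "finite B'"
      using obtain_subset_with_card_n[OF BN] by blast
    define f where "f p = fval lam (a z p)" for p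
    have f_nn: "f p \<ge> 0" for p unfolding f_def using fval_ge[OF lam(1) a_nn] .
    have fB: "f p \<ge> lam - lam^2/(4*c^2)" if "p \<in> B" for p
      unfolding f_def using fval_ge_c[OF lam(1) c0 aB[OF that] c2l] .
    have tot: "(\<Sum>p\<in>UNIV. f p) \<le> lam * real N"
    proof -
      have "(\<Sum>p\<in>UNIV. f p) = obj G x lam z M"
        unfolding f_def a_def using solution_obj[OF sol lam(1)] by simp
      also have "\<dots> \<le> obj G x lam zt (nzmask (x - G zt))"
        using sol ztb unfolding is_solution_def by blast
      also have "\<dots> = lam * real N" using obj_mask[of G x lam zt] ztN by simp
      finally show ?thesis .
    qed
    have split: "(\<Sum>p\<in>UNIV. f p) = (\<Sum>p\<in>UNIV - T. f p) + (\<Sum>p\<in>T. f p)" for T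
      by (rule sum.subset_diff) auto
    have lowB': "(\<Sum>p\<in>B'. f p) \<ge> real N * (lam - lam^2/(4*c^2))"
      using sum_bounded_below[of B' "lam - lam^2/(4*c^2)" f] fB B' by auto
    have SB': "S \<subseteq> B'"
    proof
      fix p0 assume p0: "p0 \<in> S"
      show "p0 \<in> B'"
      proof (rule ccontr)
        assume "p0 \<notin> B'"
        then have "f p0 \<le> (\<Sum>p\<in>UNIV - B'. f p)"
          by (intro member_le_sum f_nn) auto
        moreover have "f p0 \<ge> lam/2" unfolding f_def using fval_ge_half[OF lam(1)] p0 S_eq by auto
        ultimately have "real N * (lam - lam^2/(4*c^2)) + lam/2 \<le> lam * real N"
          using tot split[of B'] lowB' by linarith
        then show False using ar1[OF lam(1) c0 NL] by blast
      qed
    qed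
    have SB: "S = B'" "S \<subseteq> B" using SB' B' BS by auto
    have small: "(\<Sum>p\<in>-S. a z p) \<le> real N * lam^2/(4*c^2)"
    proof -
      have "(\<Sum>p\<in>UNIV - S. f p) = (\<Sum>p\<in>-S. a z p)"
        unfolding f_def fval_def using S_eq by (auto simp: Compl_eq_Diff_UNIV intro!: sum.cong)
      then show ?thesis using tot split[of S] lowB' SB(1) by (simp add: algebra_simps)
    qed
    have good: "Good S"
    proof (rule ccontr)
      assume "\<not> Good S"
      moreover have "card S = N" using SB B' by simp
      moreover have "z \<in> K S" unfolding K_def using zb SB(2) unfolding B_def by auto
      ultimately have "e2 \<le> (\<Sum>p\<in>-S. a z p)" using e2(2) by blast
      then have "e2 \<le> real N * lam^2/(4*c^2)" using small by linarith
      moreover have "lam \<le> 1" "lam \<le> c^2 * e2/(real N+1)" using lam unfolding lt_def by auto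
      ultimately show False using ar2[OF lam(1) c0 e2(1)] by blast
    qed
    have bnd: "\<bar>ent M p - ent (nzmask M) p\<bar> \<le> lam/(2*c^2)" for p
    proof (cases "p \<in> S")
      case True
      then have ne: "ent M p \<noteq> 0" unfolding S_def supp_def by simp
      have big: "a z p > lam/2" using True S_eq by simp
      have eq: "ent M p = 1 - lam/(2*a z p)"
        using solution_entry_facts(3)[OF sol lam(1)] big unfolding a_def by simp
      have "a z p \<ge> c^2" using aB[of p] True SB(2) by blast
      then have "lam/(2*a z p) \<le> lam/(2*c^2)" using lam c0
        by (intro divide_left_mono) (auto intro!: mult_pos_pos, smt (verit) zero_less_power)
      moreover have "lam/(2*a z p) \<ge> 0" using lam a_nn by simp
      ultimately show ?thesis using ne eq by (simp add: ent_nzmask)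
    next
      case False
      then have "ent M p = 0" unfolding S_def supp_def by simp
      then show ?thesis using lam by (simp add: ent_nzmask)
    qed
    show ?thesis using good bnd unfolding S_def by blast
  qed
  have keyM: "nzmask M \<in> M_tilde R G x \<and> mat_linf (M - nzmask M) \<le> lam/(2*c^2)"
    if lam: "0 < lam" "lam \<le> lt" and opt: "opt_M R G x lam M" for lam M
  proof -
    obtain z where sol: "is_solution R G x lam z M" using opt unfolding opt_M_def by blast
    have k: "Good (supp M)" "\<forall>p. \<bar>ent M p - ent (nzmask M) p\<bar> \<le> lam/(2*c^2)"
      using key[OF lam sol] by auto
    obtain zz where zz: "zz \<in> Z_tilde R G x" "supp (x - G zz) = supp M"
      using k(1) unfolding Good_def by blast
    have "nzmask M = nzmask (x - G zz)" using zz(2) nzmask_eq_iff by blast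
    then have "nzmask M \<in> M_tilde R G x" unfolding M_tilde_def using zz(1) by blast
    moreover have "mat_linf (M - nzmask M) \<le> lam/(2*c^2)"
      using k(2) by (intro mat_linf_le) (simp add: ent_diff)
    ultimately show ?thesis by blast
  qed
  have ev: "eventually (\<lambda>lam. 0 < lam \<and> lam \<le> lt) (at_right (0::real))"
    unfolding eventually_at_right_field using lt0 by (intro exI[of _ lt]) auto
  have g0: "((\<lambda>lam::real. lam/(2*c^2)) \<longlongrightarrow> 0) (at_right 0)"
    by (intro tendsto_divide_zero tendsto_ident_at)
  have P1: "((\<lambda>lam. d_inf (Mhat lam) (M_tilde R G x)) \<longlongrightarrow> 0) (at_right 0)"
  proof (rule Lim_null_comparison[OF _ g0])
    show "\<forall>\<^sub>F lam in at_right 0. norm (d_inf (Mhat lam) (M_tilde R G x)) \<le> lam/(2*c^2)"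
      using ev
    proof (rule eventually_mono)
      fix lam :: real assume l: "0 < lam \<and> lam \<le> lt"
      then have opt: "opt_M R G x lam (Mhat lam)" using assms(6) by auto
      have k: "nzmask (Mhat lam) \<in> M_tilde R G x" "mat_linf (Mhat lam - nzmask (Mhat lam)) \<le> lam/(2*c^2)"
        using keyM[OF _ _ opt] l by auto
      show "norm (d_inf (Mhat lam) (M_tilde R G x)) \<le> lam/(2*c^2)"
        using d_inf_bounds[OF k(1), of "Mhat lam"] k(2) by simp
    qed
  qed
  have P2: "\<forall>lam M. 0 < lam \<and> lam \<le> lt \<and> opt_M R G x lam M \<longrightarrow>
          (\<exists>Mt\<in>M_tilde R G x. Mt = nzmask M)"
    using keyM by blast
  have P3: "(Mhat \<longlongrightarrow> nzmask (x - G zstar)) (at_right 0) \<and>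
          (\<forall>lam M. 0 < lam \<and> lam \<le> lt \<and> opt_M R G x lam M \<longrightarrow>
             nzmask M = nzmask (x - G zstar))" if Z1: "Z_tilde R G x = {zstar}"
  proof -
    have Mt1: "M_tilde R G x = {nzmask (x - G zstar)}" unfolding M_tilde_def Z1 by simp
    have ii: "\<forall>lam M. 0 < lam \<and> lam \<le> lt \<and> opt_M R G x lam M \<longrightarrow>
             nzmask M = nzmask (x - G zstar)"
      using keyM Mt1 by blast
    have "(Mhat \<longlongrightarrow> nzmask (x - G zstar)) (at_right 0)"
    proof (intro vec_tendstoI)
      fix i j
      show "((\<lambda>lam. Mhat lam $ i $ j) \<longlongrightarrow> nzmask (x - G zstar) $ i $ j) (at_right 0)"
      proof (rule LIM_zero_cancel, rule Lim_null_comparison[OF _ g0])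
        show "\<forall>\<^sub>F lam in at_right 0. norm (Mhat lam $ i $ j - nzmask (x - G zstar) $ i $ j) \<le> lam/(2*c^2)"
          using ev
        proof (rule eventually_mono)
          fix lam :: real assume l: "0 < lam \<and> lam \<le> lt"
          then have opt: "opt_M R G x lam (Mhat lam)" using assms(6) by auto
          have "\<bar>ent (Mhat lam) (i,j) - ent (nzmask (Mhat lam)) (i,j)\<bar> \<le> lam/(2*c^2)"
            using key l opt unfolding opt_M_def by blast
          moreover have "nzmask (Mhat lam) = nzmask (x - G zstar)" using ii l opt by blast
          ultimately show "norm (Mhat lam $ i $ j - nzmask (x - G zstar) $ i $ j) \<le> lam/(2*c^2)"
            unfolding ent_def by simp
        qed
      qed
    qed
    then show ?thesis using ii by blast
  qed
  show ?thesis using P1 P2 P3 lt0 by blast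
qed

end
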